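(* Let $I=\langle N,M,V\rangle$ be an ordered instance of goods with $n$ agents and $m = n + c$ goods, where $n > c > 0$. Then $v_{ij} \ge \mu_i$ for every agent $i\in N$ and every good $j \in \{1, 2, \dots, n - c\}$.
   Context: An instance $I=\langle N,M,V\rangle$ has agents $N=\{1,\dots,n\}$, goods $M=\{1,\dots,m\}$ and additive valuations $v_i$ with $v_i(\emptyset)=0$, $v_i(S)=\sum_{g\in S}v_i(\{g\})$, $v_{ij}:=v_i(\{j\})\ge 0$. It is ordered if $v_{ij}\ge v_{i(j+1)}$ for all $i\in N$ and $1\le j<m$. An allocation ($n$-partition) is an ordered $n$-tuple of pairwise disjoint, possibly empty subsets of $M$ with union $M$. The maximin share of $i$ is $\mu_i=\max_A\min_j v_i(A_j)$ over all allocations $A$. *)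

theory Defs
  imports Complex_Main
begin

definition is_allocation :: "nat \<Rightarrow> nat \<Rightarrow> (nat \<Rightarrow> nat set) \<Rightarrow> bool" where
  "is_allocation n m A \<longleftrightarrow>
     (\<forall>k\<in>{1..n}. \<forall>l\<in>{1..n}. k \<noteq> l \<longrightarrow> A k \<inter> A l = {}) \<and>
     (\<Union>k\<in>{1..n}. A k) = {1..m}"

definition bundle_value :: "(nat \<Rightarrow> nat \<Rightarrow> real) \<Rightarrow> nat \<Rightarrow> nat set \<Rightarrow> real" where
  "bundle_value v i S = (\<Sum>g\<in>S. v i g)"

definition maximin_share :: "(nat \<Rightarrow> nat \<Rightarrow> real) \<Rightarrow> nat \<Rightarrow> nat \<Rightarrow> nat \<Rightarrow> real" where
  "maximin_share v n m i =
     Max {Min ((\<lambda>k. bundle_value v i (A k)) ` {1..n}) | A. is_allocation n m A}"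

definition ordered_instance :: "(nat \<Rightarrow> nat \<Rightarrow> real) \<Rightarrow> nat \<Rightarrow> nat \<Rightarrow> bool" where
  "ordered_instance v n m \<longleftrightarrow>
     (\<forall>i\<in>{1..n}. \<forall>j. 1 \<le> j \<and> j < m \<longrightarrow> v i j \<ge> v i (j + 1))"

end

theory Submission
  imports Defs
begin

lemma mono_v:
  assumes ord: "ordered_instance v n m" and i: "i \<in> {1..n}" and a: "1 \<le> a" and ab: "a \<le> b"
  shows "b \<le> m \<Longrightarrow> v i b \<le> v i a"
  using ab
proof (induct b rule: dec_induct)
  case base then show ?case by simp
next
  case (step p)
  then have "v i (p+1) \<le> v i p" using ord i a unfolding ordered_instance_def by auto
  then show ?case using step by simp
qed

lemma small_bundle:
  fixes v :: "nat \<Rightarrow> nat \<Rightarrow> real" and n m c k :: nat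
  assumes nonneg: "\<forall>i\<in>{1..n}. \<forall>j\<in>{1..m}. v i j \<ge> 0"
    and ord: "ordered_instance v n m"
    and m_def: "m = n + c"
    and nc: "n > c" and "c > 0"
    and i: "i \<in> {1..n}"
    and k: "k = n - c"
    and A: "is_allocation n m A"
  shows "\<exists>l\<in>{1..n}. bundle_value v i (A l) \<le> v i k"
proof -
  have disj: "\<And>p q. p \<in> {1..n} \<Longrightarrow> q \<in> {1..n} \<Longrightarrow> p \<noteq> q \<Longrightarrow> A p \<inter> A q = {}"
    and un: "(\<Union>l\<in>{1..n}. A l) = {1..m}" using A unfolding is_allocation_def by auto
  have sub: "\<And>l. l \<in> {1..n} \<Longrightarrow> A l \<subseteq> {1..m}" using un by blast
  define B where "B = {l \<in> {1..n}. A l \<inter> {1..<k} \<noteq> {}}"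
  define f where "f = (\<lambda>l. SOME g. g \<in> A l \<inter> {1..<k})"
  have fB: "\<And>l. l \<in> B \<Longrightarrow> f l \<in> A l \<inter> {1..<k}"
    unfolding f_def B_def by (metis (mono_tags, lifting) ex_in_conv mem_Collect_eq someI_ex)
  have "inj_on f B"
  proof (rule inj_onI)
    fix p q assume "p \<in> B" "q \<in> B" "f p = f q"
    then show "p = q" using fB[of p] fB[of q] disj[of p q] unfolding B_def by auto
  qed
  moreover have "f ` B \<subseteq> {1..<k}" using fB by auto
  ultimately have cB: "card B \<le> k - 1"
    by (metis card_atLeastLessThan card_inj_on_le finite_atLeastLessThan)
  define C where "C = {1..n} - B"
  have finC: "finite C" unfolding C_def by simp
  have "B \<subseteq> {1..n}" unfolding B_def by auto
  then have cC: "card C \<ge> c + 1" unfolding C_def using cB k nc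
    by (simp add: card_Diff_subset finite_subset)
  have CT: "\<And>l. l \<in> C \<Longrightarrow> A l \<subseteq> {k..m}"
  proof
    fix l g assume l: "l \<in> C" and g: "g \<in> A l"
    then have "g \<in> {1..m}" using sub C_def by blast
    moreover have "g \<notin> {1..<k}" using l g unfolding C_def B_def by auto
    ultimately show "g \<in> {k..m}" by auto
  qed
  have "\<exists>l\<in>C. card (A l) \<le> 1"
  proof (rule ccontr)
    assume "\<not> ?thesis"
    then have ge: "\<And>l. l \<in> C \<Longrightarrow> card (A l) \<ge> 2" by force
    have finA: "\<And>l. l \<in> C \<Longrightarrow> finite (A l)" using CT finite_subset by blast
    have "card (\<Union>l\<in>C. A l) = (\<Sum>l\<in>C. card (A l))"
      apply (rule card_UN_disjoint[OF finC])
      using finA disj C_def by auto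
    moreover have "(\<Sum>l\<in>C. card (A l)) \<ge> (\<Sum>l\<in>C. 2)" using ge by (meson sum_mono)
    moreover have "card (\<Union>l\<in>C. A l) \<le> card {k..m}"
      using CT by (intro card_mono) auto
    ultimately have "2 * card C \<le> card {k..m}" by simp
    then show False using cC m_def k nc by simp
  qed
  then obtain l where l: "l \<in> C" "card (A l) \<le> 1" by blast
  have lN: "l \<in> {1..n}" using l C_def by auto
  have k1: "1 \<le> k" using k nc by simp
  have "bundle_value v i (A l) \<le> v i k"
  proof (cases "A l = {}")
    case True
    have "v i k \<ge> 0" using nonneg i k1 k m_def by auto
    then show ?thesis using True unfolding bundle_value_def by simp
  next
    case False
    have "finite (A l)" using CT[OF l(1)] finite_subset by blast
    then have "card (A l) = 1" using False l(2) by (simp add: card_gt_0_iff le_Suc_eq)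
    then obtain g where g: "A l = {g}" by (rule card_1_singletonE)
    then have "g \<in> {k..m}" using CT[OF l(1)] by auto
    then have "v i g \<le> v i k" using mono_v[OF ord i k1, of g] by auto
    then show ?thesis using g unfolding bundle_value_def by simp
  qed
  then show ?thesis using lN by blast
qed

theorem lemma9:
  fixes v :: "nat \<Rightarrow> nat \<Rightarrow> real" and n m c :: nat
  assumes nonneg: "\<forall>i\<in>{1..n}. \<forall>j\<in>{1..m}. v i j \<ge> 0"
    and ord: "ordered_instance v n m"
    and m_def: "m = n + c"
    and "n > c" and "c > 0"
    and i: "i \<in> {1..n}"
    and j: "j \<in> {1..n - c}"
  shows "v i j \<ge> maximin_share v n m i"
proof -
  define k where "k = n - c"
  define S where "S = {Min ((\<lambda>k. bundle_value v i (A k)) ` {1..n}) | A. is_allocation n m A}"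
  have n1: "1 \<le> n" using i by auto
  have vjk: "v i k \<le> v i j" using mono_v[OF ord i, of j k] j k_def m_def by auto
  have all: "\<forall>x\<in>S. x \<le> v i k"
  proof
    fix x assume "x \<in> S"
    then obtain A where A: "is_allocation n m A" and x: "x = Min ((\<lambda>k. bundle_value v i (A k)) ` {1..n})"
      unfolding S_def by blast
    obtain l where l: "l \<in> {1..n}" "bundle_value v i (A l) \<le> v i k"
      using small_bundle[OF nonneg ord m_def assms(4,5) i k_def A] by blast
    have "x \<le> bundle_value v i (A l)" unfolding x using l(1) by (intro Min_le) auto
    then show "x \<le> v i k" using l(2) by simp
  qed
  have Ssub: "S \<subseteq> (\<lambda>B. bundle_value v i B) ` Pow {1..m}"
  proof
    fix x assume "x \<in> S"
    then obtain A where A: "is_allocation n m A" and x: "x = Min ((\<lambda>k. bundle_value v i (A k)) ` {1..n})"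
      unfolding S_def by blast
    have "x \<in> (\<lambda>k. bundle_value v i (A k)) ` {1..n}" unfolding x using n1 by (intro Min_in) auto
    then obtain l where "l \<in> {1..n}" "x = bundle_value v i (A l)" by blast
    moreover have "A l \<subseteq> {1..m}" using A \<open>l \<in> {1..n}\<close> unfolding is_allocation_def by blast
    ultimately show "x \<in> (\<lambda>B. bundle_value v i B) ` Pow {1..m}" by blast
  qed
  have finS: "finite S" using Ssub finite_subset by blast
  define A0 where "A0 = (\<lambda>l::nat. if l = 1 then {1..m} else {})"
  have "is_allocation n m A0" unfolding is_allocation_def A0_def using n1 by auto
  then have neS: "S \<noteq> {}" unfolding S_def by blast
  have "Max S \<le> v i k" using finS neS all by simp
  then show ?thesis unfolding maximin_share_def S_def[symmetric] using vjk by simp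
qed

end
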